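(* For a commutative ring $R$, the following are equivalent: (1) $R$ is uniquely weakly nil clean; (2) $R/Nil(R)$ is semi Boolean and idempotents can be lifted uniquely weakly modulo $Nil(R)$.
   Context: All rings are associative with identity; $Nil(R)$ is the set (here, ideal) of nilpotent elements and $Idem(R)$ the set of idempotents. $R$ is uniquely weakly nil clean if for every $x\in R$ there exists a unique $e\in Idem(R)$ with $x-e\in Nil(R)$ or $x+e\in Nil(R)$. A ring $A$ is semi Boolean if for every $x\in A$, $x^2=x$ or $x^2=-x$. Idempotents can be lifted uniquely weakly modulo an ideal $I$ if for every $x\in R$ with $x^2-x\in I$ there exists a unique $e\in Idem(R)$ with $x-e\in I$ or $x+e\in I$. *)

theory Defs
  imports "HOL-Algebra.QuotRing"
begin

definition nilpotents :: "('a, 'b) ring_scheme \<Rightarrow> 'a set" where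
  "nilpotents R = {x \<in> carrier R. \<exists>n::nat. x [^]\<^bsub>R\<^esub> n = \<zero>\<^bsub>R\<^esub>}"

definition idempotents :: "('a, 'b) ring_scheme \<Rightarrow> 'a set" where
  "idempotents R = {e \<in> carrier R. e \<otimes>\<^bsub>R\<^esub> e = e}"

definition uniquely_weakly_nil_clean :: "('a, 'b) ring_scheme \<Rightarrow> bool" where
  "uniquely_weakly_nil_clean R \<longleftrightarrow>
     (\<forall>x \<in> carrier R. \<exists>!e. e \<in> idempotents R \<and>
        (x \<ominus>\<^bsub>R\<^esub> e \<in> nilpotents R \<or> x \<oplus>\<^bsub>R\<^esub> e \<in> nilpotents R))"

definition semi_boolean :: "('a, 'b) ring_scheme \<Rightarrow> bool" where
  "semi_boolean A \<longleftrightarrow>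
     (\<forall>x \<in> carrier A. x \<otimes>\<^bsub>A\<^esub> x = x \<or> x \<otimes>\<^bsub>A\<^esub> x = \<ominus>\<^bsub>A\<^esub> x)"

definition idems_lift_uniquely_weakly :: "('a, 'b) ring_scheme \<Rightarrow> 'a set \<Rightarrow> bool" where
  "idems_lift_uniquely_weakly R I \<longleftrightarrow>
     (\<forall>x \<in> carrier R. (x \<otimes>\<^bsub>R\<^esub> x) \<ominus>\<^bsub>R\<^esub> x \<in> I \<longrightarrow>
        (\<exists>!e. e \<in> idempotents R \<and> (x \<ominus>\<^bsub>R\<^esub> e \<in> I \<or> x \<oplus>\<^bsub>R\<^esub> e \<in> I)))"

end

theory Submission
  imports Defs
begin

lemma (in cring) nil_sum_aux:
  assumes a: "a \<in> carrier R" and b: "b \<in> carrier R"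
    and am: "a [^] (m::nat) = \<zero>" and bn: "b [^] (n::nat) = \<zero>"
  shows "\<forall>i j. i \<le> m \<longrightarrow> j \<le> n \<longrightarrow> (m-i)+(n-j) = k \<longrightarrow>
            a [^] i \<otimes> b [^] j \<otimes> (a \<oplus> b) [^] k = \<zero>"
proof (induction k)
  case 0
  show ?case
  proof (intro allI impI)
    fix i j assume "i \<le> m" "j \<le> n" "(m-i)+(n-j) = (0::nat)"
    then have "i = m" by simp
    then show "a [^] i \<otimes> b [^] j \<otimes> (a \<oplus> b) [^] (0::nat) = \<zero>" using a b am by simp
  qed
next
  case (Suc k)
  show ?case
  proof (intro allI impI)
    fix i j assume ij: "i \<le> m" "j \<le> n" "(m-i)+(n-j) = Suc k"
    show "a [^] i \<otimes> b [^] j \<otimes> (a \<oplus> b) [^] Suc k = \<zero>"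
    proof (cases "i = m \<or> j = n")
      case True
      then show ?thesis using a b am bn by auto
    next
      case False
      define A where "A = a [^] i"
      define B where "B = b [^] j"
      define S where "S = (a \<oplus> b) [^] k"
      have c: "A \<in> carrier R" "B \<in> carrier R" "S \<in> carrier R" using a b by (auto simp: A_def B_def S_def)
      have "a [^] i \<otimes> b [^] j \<otimes> (a \<oplus> b) [^] Suc k = A \<otimes> B \<otimes> (S \<otimes> (a \<oplus> b))"
        by (simp add: A_def B_def S_def)
      also have "\<dots> = (A \<otimes> a) \<otimes> B \<otimes> S \<oplus> A \<otimes> (B \<otimes> b) \<otimes> S"
        using a b c by algebra
      also have "\<dots> = a [^] Suc i \<otimes> b [^] j \<otimes> (a \<oplus> b) [^] k \<oplus> a [^] i \<otimes> b [^] Suc j \<otimes> (a \<oplus> b) [^] k"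
        by (simp add: A_def B_def S_def)
      also have "\<dots> = \<zero>"
        using Suc.IH[rule_format, of "Suc i" j] Suc.IH[rule_format, of i "Suc j"] ij False by auto
      finally show ?thesis .
    qed
  qed
qed

lemma (in cring) nilpotents_ideal: "ideal (nilpotents R) R"
proof (rule idealI)
  show "ring R" by (rule ring_axioms)
  show "subgroup (nilpotents R) (add_monoid R)"
  proof
    show "nilpotents R \<subseteq> carrier (add_monoid R)" by (auto simp: nilpotents_def)
    show "\<one>\<^bsub>add_monoid R\<^esub> \<in> nilpotents R"
      by (auto simp: nilpotents_def intro!: exI[of _ 1])
    fix x y assume x: "x \<in> nilpotents R" and y: "y \<in> nilpotents R"
    then obtain m n where xc: "x \<in> carrier R" and yc: "y \<in> carrier R"
      and m: "x [^] (m::nat) = \<zero>" and n: "y [^] (n::nat) = \<zero>" by (auto simp: nilpotents_def)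
    have "x [^] (0::nat) \<otimes> y [^] (0::nat) \<otimes> (x \<oplus> y) [^] (m+n) = \<zero>"
      using nil_sum_aux[OF xc yc m n, of "m+n", rule_format, of 0 0] by simp
    then have "(x \<oplus> y) [^] (m+n) = \<zero>" using xc yc by simp
    then show "x \<otimes>\<^bsub>add_monoid R\<^esub> y \<in> nilpotents R" using xc yc by (auto simp: nilpotents_def)
    have "(\<ominus>\<one> \<otimes> x) [^] m = (\<ominus>\<one>) [^] m \<otimes> x [^] m" using xc by (simp add: nat_pow_distrib)
    then have "(\<ominus> x) [^] m = \<zero>" using xc m by (simp add: l_minus)
    then show "inv\<^bsub>add_monoid R\<^esub> x \<in> nilpotents R"
      using xc by (auto simp: nilpotents_def a_inv_def[symmetric])
  qed
  fix a x assume a: "a \<in> nilpotents R" and x: "x \<in> carrier R"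
  then obtain m where ac: "a \<in> carrier R" and m: "a [^] (m::nat) = \<zero>" by (auto simp: nilpotents_def)
  have "(x \<otimes> a) [^] m = \<zero>" using ac x m by (simp add: nat_pow_distrib)
  moreover have "(a \<otimes> x) [^] m = \<zero>" using ac x m by (simp add: nat_pow_distrib)
  ultimately show "x \<otimes> a \<in> nilpotents R" "a \<otimes> x \<in> nilpotents R"
    using ac x by (auto simp: nilpotents_def)
qed

lemma coset_eq_iff:
  fixes R (structure)
  assumes R: "cring R" and a: "a \<in> carrier R" and b: "b \<in> carrier R"
  shows "(nilpotents R +>\<^bsub>R\<^esub> a = nilpotents R +>\<^bsub>R\<^esub> b) \<longleftrightarrow> a \<ominus>\<^bsub>R\<^esub> b \<in> nilpotents R"
proof -
  interpret cring R by fact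
  interpret N: ideal "nilpotents R" R by (rule nilpotents_ideal)
  interpret h: ring_hom_cring R "R Quot nilpotents R" "a_r_coset R (nilpotents R)"
    by (rule N.rcos_ring_hom_cring) fact
  show ?thesis
  proof
    assume "nilpotents R +> a = nilpotents R +> b"
    then have "a \<in> nilpotents R +> b" using N.a_rcos_self[OF a] by simp
    then show "a \<ominus> b \<in> nilpotents R" using N.a_rcos_module_minus[OF ring_axioms b a] by simp
  next
    assume ab: "a \<ominus> b \<in> nilpotents R"
    have abe: "(a \<ominus> b) \<oplus> b = a" using a b by algebra
    have "nilpotents R +> ((a \<ominus> b) \<oplus> b) = (nilpotents R +> (a \<ominus> b)) \<oplus>\<^bsub>R Quot nilpotents R\<^esub> (nilpotents R +> b)"
      using h.hom_add[OF minus_closed[OF a b] b] .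
    then have "nilpotents R +> a = (nilpotents R +> (a \<ominus> b)) \<oplus>\<^bsub>R Quot nilpotents R\<^esub> (nilpotents R +> b)"
      by (simp only: abe)
    also have "nilpotents R +> (a \<ominus> b) = \<zero>\<^bsub>R Quot nilpotents R\<^esub>"
    proof -
      have z: "\<zero>\<^bsub>R Quot nilpotents R\<^esub> = nilpotents R" unfolding FactRing_def by (simp only: ring.select_convs)
      show ?thesis unfolding z by (rule N.a_rcos_const[OF ab])
    qed
    finally show "nilpotents R +> a = nilpotents R +> b"
      using h.S.l_zero b by simp
  qed
qed

lemma main_aux:
  fixes R (structure)
  assumes "cring R"
  shows "uniquely_weakly_nil_clean R \<longleftrightarrow>
           (semi_boolean (R Quot (nilpotents R)) \<and>
            idems_lift_uniquely_weakly R (nilpotents R))"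
proof -
  interpret cring R by fact
  interpret N: ideal "nilpotents R" R by (rule nilpotents_ideal)
  interpret h: ring_hom_cring R "R Quot nilpotents R" "a_r_coset R (nilpotents R)"
    by (rule N.rcos_ring_hom_cring) fact
  let ?N = "nilpotents R"
  let ?Q = "R Quot nilpotents R"
  have eq: "(?N +> a = ?N +> b) \<longleftrightarrow> a \<ominus> b \<in> ?N" if "a \<in> carrier R" "b \<in> carrier R" for a b
    using coset_eq_iff[OF assms that] .
  have Nneg: "\<ominus> z \<in> ?N" if "z \<in> ?N" for z using that by (simp add: N.a_inv_closed)
  have carrQ: "\<exists>x \<in> carrier R. X = ?N +> x" if "X \<in> carrier ?Q" for X
  proof -
    have "carrier ?Q = a_rcosets ?N" unfolding FactRing_def by (simp only: ring.select_convs partial_object.select_convs)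
    then show ?thesis using that unfolding A_RCOSETS_def' by blast
  qed
  show ?thesis
  proof
    assume U: "uniquely_weakly_nil_clean R"
    have "semi_boolean ?Q"
      unfolding semi_boolean_def
    proof
      fix X assume "X \<in> carrier ?Q"
      then obtain x where x: "x \<in> carrier R" and X: "X = ?N +> x" using carrQ by blast
      obtain e where e: "e \<in> idempotents R" "x \<ominus> e \<in> ?N \<or> x \<oplus> e \<in> ?N"
        using U x unfolding uniquely_weakly_nil_clean_def by blast
      have ec: "e \<in> carrier R" and ee: "e \<otimes> e = e" using e by (auto simp: idempotents_def)
      show "X \<otimes>\<^bsub>?Q\<^esub> X = X \<or> X \<otimes>\<^bsub>?Q\<^esub> X = \<ominus>\<^bsub>?Q\<^esub> X"
      proof (cases "x \<ominus> e \<in> ?N")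
        case True
        then have "?N +> x = ?N +> e" using eq x ec by blast
        then have "X \<otimes>\<^bsub>?Q\<^esub> X = X" using X ec ee h.hom_mult[OF ec ec] by simp
        then show ?thesis by simp
      next
        case False
        then have "x \<oplus> e \<in> ?N" using e by blast
        moreover have "x \<ominus> (\<ominus> e) = x \<oplus> e" using x ec by algebra
        ultimately have 1: "X = \<ominus>\<^bsub>?Q\<^esub> (?N +> e)" using eq[OF x a_inv_closed[OF ec]] X x ec by simp
        then have "\<ominus>\<^bsub>?Q\<^esub> X = ?N +> e"
          using ec by (simp add: h.S.minus_minus)
        moreover have "X \<otimes>\<^bsub>?Q\<^esub> X = ?N +> e"
        proof -
          have "X = ?N +> (\<ominus> e)" using 1 ec by simp
          moreover have "\<ominus> e \<otimes> \<ominus> e = e" using ec ee by algebra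
          ultimately show ?thesis using ec h.hom_mult[OF a_inv_closed[OF ec] a_inv_closed[OF ec]] by simp
        qed
        ultimately show ?thesis by simp
      qed
    qed
    moreover have "idems_lift_uniquely_weakly R ?N"
      using U unfolding uniquely_weakly_nil_clean_def idems_lift_uniquely_weakly_def by blast
    ultimately show "semi_boolean ?Q \<and> idems_lift_uniquely_weakly R ?N" by blast
  next
    assume A: "semi_boolean ?Q \<and> idems_lift_uniquely_weakly R ?N"
    show "uniquely_weakly_nil_clean R"
      unfolding uniquely_weakly_nil_clean_def
    proof
      fix x assume x: "x \<in> carrier R"
      have hx: "?N +> x \<in> carrier ?Q" using x by simp
      have sb: "(?N +> x) \<otimes>\<^bsub>?Q\<^esub> (?N +> x) = ?N +> x \<or>
                (?N +> x) \<otimes>\<^bsub>?Q\<^esub> (?N +> x) = \<ominus>\<^bsub>?Q\<^esub> (?N +> x)"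
        using A hx unfolding semi_boolean_def by blast
      show "\<exists>!e. e \<in> idempotents R \<and> (x \<ominus> e \<in> ?N \<or> x \<oplus> e \<in> ?N)"
      proof (cases "(?N +> x) \<otimes>\<^bsub>?Q\<^esub> (?N +> x) = ?N +> x")
        case True
        then have "?N +> (x \<otimes> x) = ?N +> x" using h.hom_mult[OF x x] by simp
        then have "x \<otimes> x \<ominus> x \<in> ?N" using eq[OF m_closed[OF x x] x] by simp
        then show ?thesis using A x unfolding idems_lift_uniquely_weakly_def by blast
      next
        case False
        then have "?N +> (x \<otimes> x) = ?N +> (\<ominus> x)" using sb h.hom_mult[OF x x] h.hom_a_inv[OF x] by simp
        then have "x \<otimes> x \<ominus> \<ominus> x \<in> ?N" using eq[OF m_closed[OF x x] a_inv_closed[OF x]] by blast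
        moreover have "x \<otimes> x \<ominus> \<ominus> x = (\<ominus> x) \<otimes> (\<ominus> x) \<ominus> (\<ominus> x)" using x by algebra
        ultimately have "(\<ominus> x) \<otimes> (\<ominus> x) \<ominus> (\<ominus> x) \<in> ?N" by simp
        then have ex: "\<exists>!e. e \<in> idempotents R \<and> (\<ominus> x \<ominus> e \<in> ?N \<or> \<ominus> x \<oplus> e \<in> ?N)"
          using A x unfolding idems_lift_uniquely_weakly_def by simp
        have same: "(\<ominus> x \<ominus> e \<in> ?N \<or> \<ominus> x \<oplus> e \<in> ?N) \<longleftrightarrow> (x \<ominus> e \<in> ?N \<or> x \<oplus> e \<in> ?N)"
          if ec: "e \<in> carrier R" for e
        proof -
          have 1: "\<ominus> x \<ominus> e = \<ominus> (x \<oplus> e)" using x ec by algebra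
          have 2: "\<ominus> x \<oplus> e = \<ominus> (x \<ominus> e)" using x ec by algebra
          have 3: "\<ominus> (\<ominus> z) = z" if "z \<in> carrier R" for z using that by simp
          have ni: "(\<ominus> z \<in> ?N) = (z \<in> ?N)" if "z \<in> carrier R" for z
            using Nneg[of z] Nneg[of "\<ominus> z"] 3[OF that] by metis
          have c1: "x \<oplus> e \<in> carrier R" "x \<ominus> e \<in> carrier R" using x ec by auto
          show ?thesis unfolding 1 2 ni[OF c1(1)] ni[OF c1(2)] by (rule disj_commute)
        qed
        have sm: "(e \<in> idempotents R \<and> (\<ominus> x \<ominus> e \<in> ?N \<or> \<ominus> x \<oplus> e \<in> ?N)) = (e \<in> idempotents R \<and> (x \<ominus> e \<in> ?N \<or> x \<oplus> e \<in> ?N))" for e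
        proof (cases "e \<in> idempotents R")
          case True
          then have "e \<in> carrier R" unfolding idempotents_def by simp
          then show ?thesis using same by simp
        qed simp
        show ?thesis using ex unfolding sm .
      qed
    qed
  qed
qed

theorem mainTheorem9:
  fixes R :: "('a, 'b) ring_scheme"
  assumes "cring R"
  shows "uniquely_weakly_nil_clean R \<longleftrightarrow>
           (semi_boolean (R Quot (nilpotents R)) \<and>
            idems_lift_uniquely_weakly R (nilpotents R))"
  using main_aux[OF assms] .

end
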